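(* Let $n_0\ge1$, $m\ge0$, $\epsilon>0$, and $g\in C^m(B_{n_0}(\epsilon))$. Define $h$ on $B_{n_0}(\epsilon)$, in polar coordinates $u=r\omega$ ($r\ge0$, $\omega\in S^{n_0-1}$), by $$h(r\omega)=\begin{cases}\frac1r\int_0^rg(s\omega)\,ds,& r\ne0,\\ g(0),& r=0.\end{cases}$$ Then $h\in C^m(B_{n_0}(\epsilon))$, and for every multi-index $\alpha$ with $|\alpha|\le m$, $$(\partial_u^\alpha h)(r\omega)=\begin{cases}\frac1{r^{|\alpha|+1}}\int_0^rs^{|\alpha|}(\partial_u^\alpha g)(s\omega)\,ds,& r\ne0,\\ \frac1{|\alpha|+1}(\partial^\alpha_ug)(0),& r=0.\end{cases}$$
   Context: $B_{n_0}(\epsilon)$ denotes the open Euclidean ball of radius $\epsilon$ centered at $0$ in $\mathbb R^{n_0}$. *)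

theory Defs
  imports "HOL-Analysis.Analysis"
begin

definition partial_deriv :: "'n::finite \<Rightarrow> (real^'n \<Rightarrow> real) \<Rightarrow> real^'n \<Rightarrow> real" where
  "partial_deriv i f x = deriv (\<lambda>t. f (x + t *\<^sub>R axis i 1)) 0"

text \<open>A multi-index alpha with |alpha| = k corresponds to any list of length k
  containing each index i exactly alpha(i) times.\<close>
fun iter_partial :: "'n::finite list \<Rightarrow> (real^'n \<Rightarrow> real) \<Rightarrow> real^'n \<Rightarrow> real" where
  "iter_partial [] f = f"
| "iter_partial (i # ds) f = partial_deriv i (iter_partial ds f)"

definition C_m_on :: "nat \<Rightarrow> (real^'n::finite) set \<Rightarrow> (real^'n \<Rightarrow> real) \<Rightarrow> bool" where
  "C_m_on m U f \<longleftrightarrow>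
     (\<forall>ds. length ds \<le> m \<longrightarrow>
        continuous_on U (iter_partial ds f) \<and>
        (length ds < m \<longrightarrow> (\<forall>i. \<forall>x\<in>U.
            (\<lambda>t. iter_partial ds f (x + t *\<^sub>R axis i 1)) differentiable (at 0))))"

end

theory Submission imports Defs begin

lemma int01_power: "integral {0..1::real} (\<lambda>t. t ^ k) = 1 / (real k + 1)"
proof -
  have "((\<lambda>t. t ^ k) has_integral (1 ^ Suc k / (real k + 1) - 0 ^ Suc k / (real k + 1))) {0..1::real}"
    apply (rule fundamental_theorem_of_calculus)
     apply simp
    apply (rule has_real_derivative_iff_has_vector_derivative[THEN iffD1])
    apply (rule derivative_eq_intros refl | simp)+
    apply (simp add: field_simps)
    done
  then show ?thesis by (simp add: integral_unique)
qed

lemma subst01: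
  fixes f :: "real \<Rightarrow> real"
  assumes r: "r > 0"
  shows "integral {0..r} f = r * integral {0..1} (\<lambda>t. f (r * t))"
proof -
  have im: "(\<lambda>x. x / r) ` {0..r} = {0..1}" using r by (simp add: image_divide_atLeastAtMost)
  have "integral ((\<lambda>x. x / r) ` {0..r}) (\<lambda>x. f (r * x)) = (1 / \<bar>r\<bar>) *\<^sub>R integral {0..r} f"
    using r by (intro integral_stretch_real) simp
  then show ?thesis using r by (simp add: im)
qed

lemma ball_scale: "x \<in> ball (0::real^'n) e \<Longrightarrow> t \<in> {0..1} \<Longrightarrow> t *\<^sub>R x \<in> ball 0 e"
proof -
  assume x: "x \<in> ball 0 e" and t: "t \<in> {0..1}"
  have "norm (t *\<^sub>R x) = t * norm x" using t by simp
  also have "\<dots> \<le> norm x" using t by (simp add: mult_left_le_one_le)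
  finally show ?thesis using x by simp
qed

lemma cont_param:
  fixes F :: "real^'n \<Rightarrow> real"
  assumes contF: "continuous_on (ball 0 e) F"
  shows "continuous_on (ball 0 e) (\<lambda>x. integral {0..1} (\<lambda>t. t ^ k * F (t *\<^sub>R x)))"
proof -
  have "continuous_on (ball 0 e \<times> cbox 0 1) (\<lambda>(x, t). t ^ k * F (t *\<^sub>R x))"
  proof -
    have c1: "continuous_on (ball 0 e \<times> cbox 0 (1::real)) (\<lambda>p. F (snd p *\<^sub>R fst p))"
      apply (rule continuous_on_compose2[OF contF])
       apply (intro continuous_intros)
      by (auto intro!: ball_scale simp del: mem_ball)
    have "continuous_on (ball 0 e \<times> cbox 0 (1::real)) (\<lambda>p. snd p ^ k * F (snd p *\<^sub>R fst p))"
      by (intro continuous_intros c1)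
    then show ?thesis by (simp add: case_prod_beta)
  qed
  from integral_continuous_on_param[OF this] show ?thesis by simp
qed

lemma deriv_param:
  fixes F :: "real^'n \<Rightarrow> real"
  assumes contF: "continuous_on (ball 0 e) F"
    and dF: "\<forall>y\<in>ball 0 e. (\<lambda>u. F (y + u *\<^sub>R axis i 1)) differentiable (at 0)"
    and contD: "continuous_on (ball 0 e) (partial_deriv i F)"
    and x: "x \<in> ball 0 e"
  shows "((\<lambda>s. integral {0..1} (\<lambda>t. t ^ k * F (t *\<^sub>R (x + s *\<^sub>R axis i 1))))
          has_field_derivative integral {0..1} (\<lambda>t. t ^ Suc k * partial_deriv i F (t *\<^sub>R x))) (at 0)"
proof -
  obtain d where d: "d > 0" "ball x d \<subseteq> ball 0 e" using x openE[OF open_ball] by metis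
  define U where "U = ball (0::real) d"
  have inU: "x + s *\<^sub>R axis i 1 \<in> ball 0 e" if "s \<in> U" for s
  proof -
    have "dist x (x + s *\<^sub>R axis i 1) < d" using that by (simp add: U_def dist_norm norm_axis_1)
    then show ?thesis using d by auto
  qed
  have inB: "t *\<^sub>R (x + s *\<^sub>R axis i 1) \<in> ball 0 e" if "s \<in> U" "t \<in> {0..1}" for s t
    using ball_scale inU that by blast
  have fx: "((\<lambda>s. t ^ k * F (t *\<^sub>R (x + s *\<^sub>R axis i 1))) has_field_derivative
              t ^ Suc k * partial_deriv i F (t *\<^sub>R (x + s *\<^sub>R axis i 1))) (at s within U)"
    if s: "s \<in> U" and t: "t \<in> cbox 0 1" for s t
  proof -
    define y where "y = t *\<^sub>R (x + s *\<^sub>R axis i 1)"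
    have yB: "y \<in> ball 0 e" using inB s t by (simp add: y_def)
    have D: "((\<lambda>u. F (y + u *\<^sub>R axis i 1)) has_field_derivative partial_deriv i F y) (at 0)"
      using dF yB unfolding partial_deriv_def by (simp add: DERIV_deriv_iff_real_differentiable)
    have D2: "((\<lambda>s'. t * (s' - s)) has_field_derivative t) (at s)"
      by (auto intro!: derivative_eq_intros)
    have "((\<lambda>s'. F (y + (t * (s' - s)) *\<^sub>R axis i 1)) has_field_derivative partial_deriv i F y * t) (at s)"
      using DERIV_chain2[where f="\<lambda>u. F (y + u *\<^sub>R axis i 1)" and g="\<lambda>s'. t * (s' - s)", OF _ D2] D by (simp only: diff_self mult_zero_right)
    moreover have "\<And>s'. y + (t * (s' - s)) *\<^sub>R axis i 1 = t *\<^sub>R (x + s' *\<^sub>R axis i 1)"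
      by (simp add: y_def algebra_simps)
    ultimately have "((\<lambda>s'. F (t *\<^sub>R (x + s' *\<^sub>R axis i 1))) has_field_derivative partial_deriv i F y * t) (at s)"
      by (simp only:)
    from DERIV_cmult[OF this, of "t ^ k"]
    have "((\<lambda>s'. t ^ k * F (t *\<^sub>R (x + s' *\<^sub>R axis i 1))) has_field_derivative t ^ Suc k * partial_deriv i F y) (at s)"
      by (simp add: mult_ac)
    then show ?thesis by (simp add: y_def has_field_derivative_at_within)
  qed
  have intg: "(\<lambda>t. t ^ k * F (t *\<^sub>R (x + s *\<^sub>R axis i 1))) integrable_on cbox 0 1" if s: "s \<in> U" for s
  proof -
    have "continuous_on {0..1} (\<lambda>t. F (t *\<^sub>R (x + s *\<^sub>R axis i 1)))"
      apply (rule continuous_on_compose2[OF contF])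
       apply (intro continuous_intros)
      using inB s by auto
    then have "continuous_on {0..1} (\<lambda>t. t ^ k * F (t *\<^sub>R (x + s *\<^sub>R axis i 1)))"
      by (intro continuous_intros)
    then show ?thesis by (simp add: integrable_continuous_real)
  qed
  have cont: "continuous_on (U \<times> cbox 0 1) (\<lambda>(s, t). t ^ Suc k * partial_deriv i F (t *\<^sub>R (x + s *\<^sub>R axis i 1)))"
  proof -
    have c1: "continuous_on (U \<times> cbox 0 (1::real)) (\<lambda>p. partial_deriv i F (snd p *\<^sub>R (x + fst p *\<^sub>R axis i 1)))"
      apply (rule continuous_on_compose2[OF contD])
       apply (intro continuous_intros)
      using inB by auto
    have "continuous_on (U \<times> cbox 0 (1::real)) (\<lambda>p. snd p ^ Suc k * partial_deriv i F (snd p *\<^sub>R (x + fst p *\<^sub>R axis i 1)))"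
      by (intro continuous_intros c1)
    then show ?thesis by (simp add: case_prod_beta)
  qed
  have "0 \<in> U" "convex U" using d by (auto simp: U_def)
  from leibniz_rule_field_derivative[OF fx intg cont this]
  have "((\<lambda>s. integral {0..1} (\<lambda>t. t ^ k * F (t *\<^sub>R (x + s *\<^sub>R axis i 1))))
          has_field_derivative integral {0..1} (\<lambda>t. t ^ Suc k * partial_deriv i F (t *\<^sub>R x))) (at 0 within U)"
    by (simp only: scaleR_zero_left add_0_right box_real)
  moreover have "at 0 within U = at 0" using \<open>0 \<in> U\<close> by (intro at_within_open) (auto simp: U_def)
  ultimately show ?thesis by (simp only:)
qed


theorem lemma3p11:
  fixes g h :: "real^'n \<Rightarrow> real" and m :: nat and \<epsilon> :: real
  assumes eps: "\<epsilon> > 0"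
    and g: "C_m_on m (ball 0 \<epsilon>) g"
    and h_polar: "\<forall>r \<omega>. 0 < r \<and> r < \<epsilon> \<and> norm \<omega> = 1 \<longrightarrow>
                     h (r *\<^sub>R \<omega>) = (1 / r) * integral {0..r} (\<lambda>s. g (s *\<^sub>R \<omega>))"
    and h_zero: "h 0 = g 0"
  shows "C_m_on m (ball 0 \<epsilon>) h \<and>
    (\<forall>ds. length ds \<le> m \<longrightarrow>
       (\<forall>r \<omega>. 0 < r \<and> r < \<epsilon> \<and> norm \<omega> = 1 \<longrightarrow>
          iter_partial ds h (r *\<^sub>R \<omega>) =
            (1 / r ^ (length ds + 1)) *
              integral {0..r} (\<lambda>s. s ^ length ds * iter_partial ds g (s *\<^sub>R \<omega>))) \<and>
       iter_partial ds h 0 = (1 / (real (length ds) + 1)) * iter_partial ds g 0)"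
proof -
  define B where "B = ball (0::real^'n) \<epsilon>"
  have gC: "continuous_on B (iter_partial ds g)" if "length ds \<le> m" for ds
    using g that unfolding C_m_on_def B_def by blast
  have gD: "\<forall>y\<in>B. (\<lambda>t. iter_partial ds g (y + t *\<^sub>R axis i 1)) differentiable (at 0)"
    if "length ds < m" for ds i
    using g that unfolding C_m_on_def B_def by auto
  define G where "G ds x = integral {0..1} (\<lambda>t. t ^ length ds * iter_partial ds g (t *\<^sub>R x))" for ds x
  have Gcont: "continuous_on B (G ds)" if "length ds \<le> m" for ds
    unfolding G_def B_def using cont_param[OF gC[OF that, unfolded B_def]] by simp
  have Gder: "((\<lambda>s. G ds (x + s *\<^sub>R axis i 1)) has_field_derivative G (i # ds) x) (at 0)"
    if "length ds < m" "x \<in> B" for ds i x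
  proof -
    have c2: "continuous_on B (partial_deriv i (iter_partial ds g))"
      using gC[of "i # ds"] that by simp
    from deriv_param[OF gC[unfolded B_def] gD[OF that(1), unfolded B_def] c2[unfolded B_def] that(2)[unfolded B_def], of "length ds"]
    show ?thesis using that(1) by (simp add: G_def)
  qed
  have ev: "eventually (\<lambda>s. x + s *\<^sub>R axis i 1 \<in> B) (nhds 0)" if xB: "x \<in> B" for x i
  proof -
    obtain d where d: "d > 0" "ball x d \<subseteq> B" using openE[OF open_ball, of x 0 \<epsilon>] xB unfolding B_def by blast
    have "eventually (\<lambda>s. s \<in> ball (0::real) d) (nhds 0)"
      using d by (intro eventually_nhds_in_open) auto
    then show ?thesis
    proof (rule eventually_mono)
      fix s :: real assume "s \<in> ball 0 d"
      then have "x + s *\<^sub>R axis i 1 \<in> ball x d" by (simp add: dist_norm)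
      then show "x + s *\<^sub>R axis i 1 \<in> B" using d by auto
    qed
  qed
  have main: "length ds \<le> m \<Longrightarrow> \<forall>x\<in>B. iter_partial ds h x = G ds x" for ds
  proof (induction ds)
    case Nil
    show ?case
    proof
      fix x assume x: "x \<in> B"
      show "iter_partial [] h x = G [] x"
      proof (cases "x = 0")
        case True
        then show ?thesis by (simp add: G_def h_zero)
      next
        case False
        define r where "r = norm x"
        define \<omega> where "\<omega> = x /\<^sub>R r"
        have r: "0 < r" "r < \<epsilon>" using False x by (auto simp: r_def B_def)
        have om: "norm \<omega> = 1" using False by (simp add: \<omega>_def r_def)
        have xe: "x = r *\<^sub>R \<omega>" using r by (simp add: \<omega>_def)
        have "h x = (1 / r) * integral {0..r} (\<lambda>s. g (s *\<^sub>R \<omega>))"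
          using h_polar r om xe by auto
        also have "\<dots> = (1 / r) * (r * integral {0..1} (\<lambda>t. g ((r * t) *\<^sub>R \<omega>)))"
          using subst01[OF r(1)] by simp
        also have "\<dots> = integral {0..1} (\<lambda>t. g (t *\<^sub>R x))"
          using r by (simp add: xe mult.commute)
        finally show ?thesis by (simp add: G_def)
      qed
    qed
  next
    case (Cons i ds)
    then have lm: "length ds < m" by simp
    with Cons.IH have IH: "\<forall>x\<in>B. iter_partial ds h x = G ds x" by simp
    show ?case
    proof
      fix x assume x: "x \<in> B"
      have "iter_partial (i # ds) h x = deriv (\<lambda>u. iter_partial ds h (x + u *\<^sub>R axis i 1)) 0"
        by (simp add: partial_deriv_def)
      also have "\<dots> = deriv (\<lambda>u. G ds (x + u *\<^sub>R axis i 1)) 0"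
      proof (rule deriv_cong_ev[OF _ refl])
        show "eventually (\<lambda>u. iter_partial ds h (x + u *\<^sub>R axis i 1) = G ds (x + u *\<^sub>R axis i 1)) (nhds 0)"
          using ev[OF x, of i] by (rule eventually_mono) (use IH in auto)
      qed
      also have "\<dots> = G (i # ds) x"
        by (rule DERIV_imp_deriv[OF Gder[OF lm x]])
      finally show "iter_partial (i # ds) h x = G (i # ds) x" .
    qed
  qed
  have C: "C_m_on m B h"
    unfolding C_m_on_def
  proof (intro allI impI conjI ballI)
    fix ds :: "'n list" assume l: "length ds \<le> m"
    show "continuous_on B (iter_partial ds h)"
      using Gcont[OF l] main[OF l] continuous_on_cong by metis
  next
    fix ds :: "'n list" and i x assume l: "length ds < m" and x: "x \<in> B"
    have "((\<lambda>u. iter_partial ds h (x + u *\<^sub>R axis i 1)) has_field_derivative G (i # ds) x) (at 0)"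
    proof -
      have evq: "eventually (\<lambda>u. iter_partial ds h (x + u *\<^sub>R axis i 1) = G ds (x + u *\<^sub>R axis i 1)) (nhds 0)"
        using ev[OF x, of i] by (rule eventually_mono) (use main[OF less_imp_le[OF l]] in auto)
      show ?thesis using Gder[OF l x, of i] DERIV_cong_ev[OF refl evq refl] by simp
    qed
    then show "(\<lambda>t. iter_partial ds h (x + t *\<^sub>R axis i 1)) differentiable (at 0)"
      using DERIV_deriv_iff_real_differentiable DERIV_imp_deriv by metis
  qed
  have F: "(\<forall>r \<omega>. 0 < r \<and> r < \<epsilon> \<and> norm \<omega> = 1 \<longrightarrow>
          iter_partial ds h (r *\<^sub>R \<omega>) =
            (1 / r ^ (length ds + 1)) *
              integral {0..r} (\<lambda>s. s ^ length ds * iter_partial ds g (s *\<^sub>R \<omega>))) \<and>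
       iter_partial ds h 0 = (1 / (real (length ds) + 1)) * iter_partial ds g 0"
    if l: "length ds \<le> m" for ds
  proof (intro conjI allI impI)
    fix r :: real and \<omega> :: "real^'n" assume a: "0 < r \<and> r < \<epsilon> \<and> norm \<omega> = 1"
    have xB: "r *\<^sub>R \<omega> \<in> B" using a by (simp add: B_def)
    let ?k = "length ds"
    let ?D = "iter_partial ds g"
    have "integral {0..r} (\<lambda>s. s ^ ?k * ?D (s *\<^sub>R \<omega>))
        = r * integral {0..1} (\<lambda>t. (r * t) ^ ?k * ?D ((r * t) *\<^sub>R \<omega>))"
      using subst01 a by blast
    also have "\<dots> = r * integral {0..1} (\<lambda>t. r ^ ?k * (t ^ ?k * ?D (t *\<^sub>R (r *\<^sub>R \<omega>))))"
      by (simp add: power_mult_distrib mult.commute mult.left_commute)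
    also have "\<dots> = r ^ (?k + 1) * G ds (r *\<^sub>R \<omega>)"
      by (simp add: G_def)
    finally have "integral {0..r} (\<lambda>s. s ^ ?k * ?D (s *\<^sub>R \<omega>)) = r ^ (?k + 1) * G ds (r *\<^sub>R \<omega>)" .
    then show "iter_partial ds h (r *\<^sub>R \<omega>) =
            (1 / r ^ (length ds + 1)) * integral {0..r} (\<lambda>s. s ^ length ds * iter_partial ds g (s *\<^sub>R \<omega>))"
      using main[OF l] xB a by simp
  next
    have "0 \<in> B" using eps by (simp add: B_def)
    then have "iter_partial ds h 0 = G ds 0" using main[OF l] by blast
    also have "\<dots> = integral {0..1} (\<lambda>t. t ^ length ds) * iter_partial ds g 0"
      by (simp add: G_def)
    also have "\<dots> = (1 / (real (length ds) + 1)) * iter_partial ds g 0"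
      by (simp add: int01_power)
    finally show "iter_partial ds h 0 = (1 / (real (length ds) + 1)) * iter_partial ds g 0" .
  qed
  show ?thesis using C F unfolding B_def by blast
qed

end
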